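(* Assume in addition $L\ge\mu$. Consider any sequences generated by Algorithm 4, let $\sigma:=\hat\sigma+\sigma_u$, $x^*$ the unique minimizer of $h=f+g$, $d_0:=\|x^*-x^0\|$ and $\gamma:=\sqrt{\sigma_u/(1+\sigma_u)}$, $\rho:=1-\gamma\sqrt{\mu/L}$. Then: (a) for all $k\ge1$, $h(y^k)-h(x^* )\le\frac{Ld_0^2}{2\sigma_u}\rho^{k-1}$ and $\max\{\|x^*-y^k\|,\|x^*-x^k\|\}\le\sqrt{\frac{L}{\sigma_u\mu}}\,d_0\,\rho^{(k-1)/2}$; (b) for all $k\ge1$, $v^{k+1}\in\partial_{\varepsilon_{k+1}}f(y^{k+1})+\nabla g(y^{k+1})$, $\|v^{k+1}\|\le\frac{6d_0L^{3/2}}{\mu^{1/2}\sigma_u^{3/2}}\Big(1+\sigma\sqrt{1+\frac{\sigma_u\mu}{L}}\Big)\rho^{(k-1)/2}$, and $\varepsilon_{k+1}\le\frac{3\sigma^2d_0^2L^2}{\sigma_u^2\mu}\rho^{k-1}$.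
   Context: $\mathcal H$ is a finite-dimensional real inner product space with norm $\|\cdot\|$. $f,g:\mathcal H\to(-\infty,\infty]$ are proper, closed, convex, $h:=f+g$ has nonempty domain; $g$ is $\mu$-strongly convex ($\mu>0$). $\Omega\subseteq\mathcal H$ is a nonempty closed convex set containing $\mathrm{dom}\,f$, $P_\Omega$ is the orthogonal projection onto $\Omega$, and $g$ is differentiable on an open set containing $\Omega$ with $\|\nabla g(x)-\nabla g(y)\|\le L\|x-y\|$ for $x,y\in\Omega$, $L>0$. For $\varepsilon\ge0$, $\partial_\varepsilon f(y):=\{u: f(w)\ge f(y)+\langle u,w-y\rangle-\varepsilon\ \forall w\}$. Definition: for $\hat\sigma\ge0$, $(y,u,\varepsilon)\in\mathcal H\times\mathcal H\times[0,\infty)$ is a $\hat\sigma$-approximate PG solution at $(x,\lambda)\in\mathcal H\times(0,\infty)$ if, with $z:=P_\Omega(x)$, $u\in\partial_\varepsilon f(y)$ and $\frac{\|\lambda(u+\nabla g(z))+y-x\|^2}{1+\lambda\mu}+2\lambda\varepsilon\le\hat\sigma^2\|y-x\|^2$. Algorithm 4: Choose $x^0,y^0\in\mathcal H$, $\hat\sigma\ge0$, $0<\sigma_u\le1$ with $\sigma_u+\hat\sigma<1$; let $\lambda:=\frac{\sigma_u}{\sqrt{(\sigma_u\mu/2)^2+L^2}-\sigma_u\mu/2}$ and $A_0=0$. For $k=0,1,\dots$: set $a_{k+1}=\frac{(1+2\mu A_k)\lambda+\sqrt{(1+2\mu A_k)^2\lambda^2+4(1+\mu A_k)A_k\lambda}}{2}$,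 $\tilde x^k=\frac{a_{k+1}-\mu A_k\lambda}{A_k+a_{k+1}}x^k+\frac{A_k+\mu A_k\lambda}{A_k+a_{k+1}}y^k$, compute a $\hat\sigma$-approximate PG solution $(y^{k+1},u^{k+1},\varepsilon_{k+1})$ at $(\tilde x^k,\lambda)$, then set $A_{k+1}=A_k+a_{k+1}$, $v^{k+1}=u^{k+1}+\nabla g(y^{k+1})$, $x^{k+1}=\frac{1+\mu A_k}{1+\mu A_{k+1}}x^k+\frac{\mu a_{k+1}}{1+\mu A_{k+1}}y^{k+1}-\frac{a_{k+1}}{1+\mu A_{k+1}}v^{k+1}$. "Sequences generated by Algorithm 4" means any sequences satisfying these relations for all $k\ge0$. *)

theory Defs
  imports "HOL-Analysis.Analysis"
begin

text \<open>Extended-real-valued functions on a finite-dimensional real inner product space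
 (a type of class euclidean_space); the value \<infinity> encodes points outside the domain.\<close>

definition edom :: "('a \<Rightarrow> ereal) \<Rightarrow> 'a set" where
  "edom f = {x. f x < \<infinity>}"

definition proper_fun :: "('a \<Rightarrow> ereal) \<Rightarrow> bool" where
  "proper_fun f \<longleftrightarrow> (\<forall>x. f x \<noteq> -\<infinity>) \<and> (\<exists>x. f x \<noteq> \<infinity>)"

definition closed_fun :: "('a::topological_space \<Rightarrow> ereal) \<Rightarrow> bool" where
  "closed_fun f \<longleftrightarrow> closed {(x, t::real). f x \<le> ereal t}"

definition convex_fun :: "('a::real_vector \<Rightarrow> ereal) \<Rightarrow> bool" where
  "convex_fun f \<longleftrightarrow> (\<forall>x y t. 0 < t \<and> t < 1 \<longrightarrow>
      f (t *\<^sub>R x + (1 - t) *\<^sub>R y) \<le> ereal t * f x + ereal (1 - t) * f y)"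

definition strongly_convex_fun :: "real \<Rightarrow> ('a::real_normed_vector \<Rightarrow> ereal) \<Rightarrow> bool" where
  "strongly_convex_fun \<mu> f \<longleftrightarrow> (\<forall>x y t. 0 < t \<and> t < 1 \<longrightarrow>
      f (t *\<^sub>R x + (1 - t) *\<^sub>R y) \<le> ereal t * f x + ereal (1 - t) * f y
         - ereal (\<mu> / 2 * t * (1 - t) * (norm (x - y))\<^sup>2))"

definition eps_subdiff :: "('a::real_inner \<Rightarrow> ereal) \<Rightarrow> real \<Rightarrow> 'a \<Rightarrow> 'a set" where
  "eps_subdiff f \<epsilon> y = {u. \<forall>w. f w \<ge> f y + ereal (inner u (w - y) - \<epsilon>)}"

text \<open>\<hat>\<sigma>-approximate PG solution (y,u,\<epsilon>) at (x,\<lambda>); G is the gradient of g,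
  \<Omega> the set with projection closest_point \<Omega>.\<close>
definition approx_PG_sol ::
  "('a::euclidean_space \<Rightarrow> ereal) \<Rightarrow> ('a \<Rightarrow> 'a) \<Rightarrow> 'a set \<Rightarrow> real \<Rightarrow> real
    \<Rightarrow> 'a \<Rightarrow> real \<Rightarrow> 'a \<Rightarrow> 'a \<Rightarrow> real \<Rightarrow> bool" where
  "approx_PG_sol f G \<Omega> \<mu> \<sigma>h x lam y u \<epsilon> \<longleftrightarrow>
     (let z = closest_point \<Omega> x in
       \<epsilon> \<ge> 0 \<and> u \<in> eps_subdiff f \<epsilon> y \<and>
       (norm (lam *\<^sub>R (u + G z) + y - x))\<^sup>2 / (1 + lam * \<mu>) + 2 * lam * \<epsilon>
          \<le> \<sigma>h\<^sup>2 * (norm (y - x))\<^sup>2)"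

end

theory Submission
  imports Defs
begin

lemma conv_sq:
  fixes q p :: "'a::real_inner"
  assumes "c1 \<ge> 0" "c2 \<ge> 0" "c1 + c2 = 1"
  shows "(norm (c1 *\<^sub>R q + c2 *\<^sub>R p))\<^sup>2 \<le> c1 * (norm q)\<^sup>2 + c2 * (norm p)\<^sup>2"
proof -
  have "c1 * (norm q)\<^sup>2 + c2 * (norm p)\<^sup>2 - (norm (c1 *\<^sub>R q + c2 *\<^sub>R p))\<^sup>2
        = c1 * c2 * (norm (q - p))\<^sup>2"
  proof -
    have c1: "c1 = 1 - c2" using assms by simp
    show ?thesis unfolding c1 power2_norm_eq_inner
      by (simp add: inner_simps algebra_simps inner_commute power2_eq_square)
  qed
  moreover have "c1 * c2 * (norm (q - p))\<^sup>2 \<ge> 0" using assms by simp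
  ultimately show ?thesis by linarith
qed

lemma quad_min:
  fixes q s v t :: "'a::real_inner"
  assumes "D *\<^sub>R t = b *\<^sub>R q - a *\<^sub>R v" "D = b + c"
  shows "b/2 * (norm (s - q))\<^sup>2 + a * inner v s + c/2 * (norm s)\<^sup>2
       - (b/2 * (norm (t - q))\<^sup>2 + a * inner v t + c/2 * (norm t)\<^sup>2)
       = D/2 * (norm (s - t))\<^sup>2"
proof -
  have g0: "D *\<^sub>R t - b *\<^sub>R q + a *\<^sub>R v = 0" using assms(1) by simp
  have "b/2 * (norm (s - q))\<^sup>2 + a * inner v s + c/2 * (norm s)\<^sup>2
       - (b/2 * (norm (t - q))\<^sup>2 + a * inner v t + c/2 * (norm t)\<^sup>2)
       - D/2 * (norm (s - t))\<^sup>2 = inner (D *\<^sub>R t - b *\<^sub>R q + a *\<^sub>R v) (s - t)"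
    unfolding power2_norm_eq_inner assms(2)
    by (simp add: inner_simps algebra_simps inner_commute) (simp add: field_simps)
  with g0 show ?thesis by simp
qed

lemma core:
  fixes q p s v t E :: "'a::real_inner"
  assumes A0: "A \<ge> 0" and a0: "a > 0" and l0: "lam > 0" and m0: "mu > 0"
    and hq: "a^2 = lam*(1+2*mu*A)*a + lam*(1+mu*A)*A"
    and ha: "a \<ge> mu*A*lam"
    and ht: "(1+mu*(A+a)) *\<^sub>R t = (1+mu*A) *\<^sub>R q - a *\<^sub>R v"
    and hE: "E = ((a - mu*A*lam)/(A+a)) *\<^sub>R q + ((A + mu*A*lam)/(A+a)) *\<^sub>R p"
    and hpe: "(norm (lam *\<^sub>R v - E))\<^sup>2/(1+lam*mu) + 2*lam*eps \<le> (norm E)\<^sup>2"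
    and h1: "Hs \<ge> H' + inner v s - eps + mu/2 * (norm s)\<^sup>2"
    and h2: "A*Hk \<ge> A*(H' + inner v p - eps + mu/2*(norm p)\<^sup>2)"
  shows "(A+a)*(H'-Hs) + (1+mu*(A+a))/2*(norm (t-s))\<^sup>2 \<le> A*(Hk-Hs) + (1+mu*A)/2*(norm (q-s))\<^sup>2"
proof -
  define D where "D = 1+mu*(A+a)"
  define b where "b = 1+mu*A"
  define c1 where "c1 = (a - mu*A*lam)/(A+a)"
  define c2 where "c2 = (A + mu*A*lam)/(A+a)"
  have D0: "D > 0" unfolding D_def using A0 a0 m0 by (simp add: add_pos_nonneg)
  have b0: "b > 0" unfolding b_def using A0 m0 by (simp add: add_pos_nonneg)
  have Aa: "A + a > 0" using A0 a0 by simp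
  have key1: "a^2*(1+lam*mu) = lam*(A+a)*D"
  proof -
    have "a^2*(1+lam*mu) - lam*(A+a)*D = a^2 - (lam*(1+2*mu*A)*a + lam*(1+mu*A)*A)"
      unfolding D_def by (simp add: algebra_simps power2_eq_square)
    with hq show ?thesis by simp
  qed
  have key2: "a*(a - mu*A*lam) = lam*b*(A+a)"
  proof -
    have "a*(a - mu*A*lam) - lam*b*(A+a) = a^2 - (lam*(1+2*mu*A)*a + lam*(1+mu*A)*A)"
      unfolding b_def by (simp add: algebra_simps power2_eq_square)
    with hq show ?thesis by simp
  qed
  have c1a: "a^2*c1 = lam*a*b"
  proof -
    have "a^2*c1 = a*(a*(a - mu*A*lam))/(A+a)" unfolding c1_def by (simp add: power2_eq_square)
    also have "\<dots> = a*(lam*b*(A+a))/(A+a)" by (simp only: key2)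
    also have "\<dots> = lam*a*b" using Aa by simp
    finally show ?thesis .
  qed
  have c2a: "a^2*c2 = lam*A*D"
  proof -
    have "a^2*c2 = A*(a^2*(1+lam*mu))/(A+a)" unfolding c2_def by (simp add: field_simps)
    also have "\<dots> = lam*A*D" using key1 Aa by (simp add: field_simps)
    finally show ?thesis .
  qed
  have c1p: "c1 \<ge> 0" unfolding c1_def using ha Aa by simp
  have c2p: "c2 \<ge> 0" unfolding c2_def using A0 l0 m0 Aa by simp
  have c12: "c1 + c2 = 1"
  proof -
    have "c1 + c2 = ((a - mu*A*lam) + (A + mu*A*lam))/(A+a)" unfolding c1_def c2_def by (rule add_divide_distrib[symmetric])
    also have "(a - mu*A*lam) + (A + mu*A*lam) = A + a" by simp
    finally show ?thesis using Aa by simp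
  qed
  define Q where "Q = (norm q)\<^sup>2"
  define P where "P = (norm p)\<^sup>2"
  define V where "V = (norm v)\<^sup>2"
  define R where "R = inner q v"
  define Rp where "Rp = inner v p"
  define EE where "EE = (norm E)\<^sup>2"
  define M where "M = b/2*(norm (t-q))\<^sup>2 + a*inner v t + (a*mu)/2*(norm t)\<^sup>2"
  have qm: "b/2 * (norm (s - q))\<^sup>2 + a * inner v s + (a*mu)/2 * (norm s)\<^sup>2 - M = D/2 * (norm (s - t))\<^sup>2"
    unfolding M_def
    by (rule quad_min) (use ht in \<open>simp_all add: D_def b_def algebra_simps\<close>)
  have tdef: "t = (1/D) *\<^sub>R (b *\<^sub>R q - a *\<^sub>R v)"
  proof -
    have "t = (1/D) *\<^sub>R (D *\<^sub>R t)" using D0 by simp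
    also have "D *\<^sub>R t = b *\<^sub>R q - a *\<^sub>R v" using ht unfolding D_def b_def .
    finally show ?thesis .
  qed
  have Db: "D = b + mu*a" unfolding D_def b_def by (simp add: algebra_simps)
  have Dt: "D *\<^sub>R t = b *\<^sub>R q - a *\<^sub>R v" using ht unfolding D_def b_def .
  have Dtq: "D *\<^sub>R (t - q) = (-(mu*a)) *\<^sub>R q - a *\<^sub>R v"
    using Dt unfolding Db by (simp add: algebra_simps)
  have n1: "D^2*(norm(t-q))^2 = mu^2*a^2*Q + 2*mu*a^2*R + a^2*V"
  proof -
    have "D^2*(norm(t-q))^2 = (norm (D *\<^sub>R (t - q)))^2" by (simp add: power_mult_distrib)
    also have "\<dots> = mu^2*a^2*Q + 2*mu*a^2*R + a^2*V" unfolding Dtq Q_def R_def V_def power2_norm_eq_inner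
      by (simp add: inner_simps inner_commute power2_eq_square algebra_simps)
    finally show ?thesis .
  qed
  have n2: "D^2*(norm t)^2 = b^2*Q - 2*a*b*R + a^2*V"
  proof -
    have "D^2*(norm t)^2 = (norm (D *\<^sub>R t))^2" by (simp add: power_mult_distrib)
    also have "\<dots> = b^2*Q - 2*a*b*R + a^2*V" unfolding Dt Q_def R_def V_def power2_norm_eq_inner
      by (simp add: inner_simps inner_commute power2_eq_square algebra_simps)
    finally show ?thesis .
  qed
  have n3: "D*inner v t = b*R - a*V"
  proof -
    have "D*inner v t = inner v (D *\<^sub>R t)" by simp
    also have "\<dots> = b*R - a*V" unfolding Dt R_def V_def power2_norm_eq_inner
      by (simp add: inner_simps inner_commute)
    finally show ?thesis .
  qed
  have Mf: "2*D*M = mu*a*b*Q + 2*a*b*R - a^2*V"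
  proof -
    have "2*D*M = (b*(D^2*(norm(t-q))^2) + 2*a*D*(D*inner v t) + a*mu*(D^2*(norm t)^2))/D"
      unfolding M_def using D0 by (simp add: field_simps power2_eq_square)
    also have "\<dots> = (b*(mu^2*a^2*Q + 2*mu*a^2*R + a^2*V) + 2*a*D*(b*R - a*V) + a*mu*(b^2*Q - 2*a*b*R + a^2*V))/D"
      unfolding n1 n2 n3 ..
    also have "b*(mu^2*a^2*Q + 2*mu*a^2*R + a^2*V) + 2*a*D*(b*R - a*V) + a*mu*(b^2*Q - 2*a*b*R + a^2*V)
       = D*(mu*a*b*Q + 2*a*b*R - a^2*V)" unfolding Db by (simp add: algebra_simps power2_eq_square)
    finally show ?thesis using D0 by simp
  qed
  have EEle: "EE \<le> c1*Q + c2*P" unfolding EE_def Q_def P_def hE c1_def[symmetric] c2_def[symmetric]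
    by (rule conv_sq[OF c1p c2p c12])
  have vE: "inner v E = c1*R + c2*Rp" unfolding hE c1_def[symmetric] c2_def[symmetric] R_def Rp_def
    by (simp add: inner_simps inner_commute)
  have nE: "(norm (lam *\<^sub>R v - E))\<^sup>2 = lam^2*V - 2*lam*inner v E + EE"
    unfolding V_def EE_def power2_norm_eq_inner by (simp add: inner_simps inner_commute power2_eq_square)
  have lm: "1 + lam*mu > 0" using l0 m0 by (simp add: add_pos_pos)
  have s1: "lam^2*V - 2*lam*(c1*R+c2*Rp) + EE + 2*lam*eps*(1+lam*mu) \<le> (1+lam*mu)*EE"
  proof -
    have "(norm (lam *\<^sub>R v - E))\<^sup>2 + 2*lam*eps*(1+lam*mu) \<le> (1+lam*mu)*EE"
    proof -
      have "(norm (lam *\<^sub>R v - E))\<^sup>2/(1+lam*mu) \<le> EE - 2*lam*eps" using hpe unfolding EE_def by simp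
      hence "(norm (lam *\<^sub>R v - E))\<^sup>2 \<le> (EE - 2*lam*eps)*(1+lam*mu)" using lm by (simp add: pos_divide_le_eq)
      then show ?thesis by (simp add: algebra_simps)
    qed
    then show ?thesis unfolding nE vE .
  qed
  have s2: "lam^2*V - 2*lam*(c1*R+c2*Rp) + 2*lam*eps*(1+lam*mu) \<le> lam*mu*(c1*Q+c2*P)"
  proof -
    have "lam*mu*EE \<le> lam*mu*(c1*Q+c2*P)" using EEle l0 m0 by (simp add: mult_left_mono)
    with s1 show ?thesis by (simp add: algebra_simps)
  qed
  have s3: "a^2*(lam^2*V - 2*lam*(c1*R+c2*Rp) + 2*lam*eps*(1+lam*mu)) \<le> a^2*(lam*mu*(c1*Q+c2*P))"
    using s2 by (simp add: mult_left_mono)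
  have s3': "a^2*(lam^2*V - 2*lam*(c1*R+c2*Rp) + 2*lam*eps*(1+lam*mu))
     = lam^2*(a^2*V - 2*a*b*R - 2*A*D*Rp + 2*(A+a)*D*eps)"
  proof -
    have "a^2*(lam^2*V - 2*lam*(c1*R+c2*Rp) + 2*lam*eps*(1+lam*mu))
      = lam^2*a^2*V - 2*lam*((a^2*c1)*R + (a^2*c2)*Rp) + 2*lam*eps*(a^2*(1+lam*mu))"
      by (simp add: algebra_simps)
    also have "\<dots> = lam^2*(a^2*V - 2*a*b*R - 2*A*D*Rp + 2*(A+a)*D*eps)"
      unfolding c1a c2a key1 by (simp add: algebra_simps power2_eq_square)
    finally show ?thesis .
  qed
  have s3'': "a^2*(lam*mu*(c1*Q+c2*P)) = lam^2*(mu*a*b*Q + mu*A*D*P)"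
  proof -
    have "a^2*(lam*mu*(c1*Q+c2*P)) = lam*mu*((a^2*c1)*Q + (a^2*c2)*P)" by (simp add: algebra_simps)
    also have "\<dots> = lam^2*(mu*a*b*Q + mu*A*D*P)" unfolding c1a c2a by (simp add: algebra_simps power2_eq_square)
    finally show ?thesis .
  qed
  have s4: "a^2*V - 2*a*b*R - 2*A*D*Rp + 2*(A+a)*D*eps \<le> mu*a*b*Q + mu*A*D*P"
  proof -
    have "lam^2*(a^2*V - 2*a*b*R - 2*A*D*Rp + 2*(A+a)*D*eps) \<le> lam^2*(mu*a*b*Q + mu*A*D*P)"
      using s3 s3' s3'' by simp
    then show ?thesis using l0 by (simp add: mult_le_cancel_left)
  qed
  have s5: "2*D*(M + A*Rp + mu*A/2*P) \<ge> 2*D*((A+a)*eps)"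
    using s4 Mf by (simp add: algebra_simps)
  have s6: "M + A*Rp + mu*A/2*P \<ge> (A+a)*eps"
    using s5 D0 by (simp add: mult_le_cancel_left)
  have h1a: "a*Hs \<ge> a*(H' + inner v s - eps + mu/2 * (norm s)\<^sup>2)"
    using h1 a0 by (simp add: mult_left_mono)
  have nts: "(norm (t-s))\<^sup>2 = (norm (s-t))\<^sup>2" by (simp add: norm_minus_commute)
  have nqs: "(norm (q-s))\<^sup>2 = (norm (s-q))\<^sup>2" by (simp add: norm_minus_commute)
  have h1b: "a*Hs \<ge> a*H' + a*inner v s - a*eps + (a*mu)/2*(norm s)^2"
    using h1a by (simp add: algebra_simps)
  have h2b: "A*Hk \<ge> A*H' + A*Rp - A*eps + (mu*A)/2*P"
    using h2 unfolding Rp_def P_def by (simp add: algebra_simps)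
  have s6b: "M + A*Rp + (mu*A)/2*P \<ge> A*eps + a*eps" using s6 by (simp add: algebra_simps)
  have g1: "(A+a)*(H'-Hs) = A*H' + a*H' - A*Hs - a*Hs" by (simp add: algebra_simps)
  have g2: "A*(Hk-Hs) = A*Hk - A*Hs" by (simp add: algebra_simps)
  show ?thesis unfolding nts nqs D_def[symmetric] b_def[symmetric] g1 g2
    using qm h1b h2b s6b by linarith
qed

lemma ereal_le_real: "x \<le> ereal r \<Longrightarrow> x \<noteq> -\<infinity> \<Longrightarrow> real_of_ereal x \<le> r"
  by (cases x) auto

lemma grad_ineq:
  fixes g :: "'a::euclidean_space \<Rightarrow> ereal"
  assumes sc: "strongly_convex_fun mu g" and nm: "\<forall>x. g x \<noteq> -\<infinity>"
    and gz: "g z \<noteq> \<infinity>" and gw: "g w \<noteq> \<infinity>"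
    and der: "((\<lambda>w. real_of_ereal (g w)) has_derivative (\<lambda>d. inner G0 d)) (at z)"
  shows "real_of_ereal (g w) \<ge> real_of_ereal (g z) + inner G0 (w - z) + mu/2*(norm(w-z))\<^sup>2"
proof -
  define d where "d = w - z"
  define phi where "phi t = real_of_ereal (g (z + t *\<^sub>R d))" for t :: real
  define gw' where "gw' = real_of_ereal (g w)"
  define gz' where "gz' = real_of_ereal (g z)"
  define N where "N = (norm d)\<^sup>2"
  have gwe: "g w = ereal gw'" unfolding gw'_def using gw nm by (cases "g w") auto
  have gze: "g z = ereal gz'" unfolding gz'_def using gz nm by (cases "g z") auto
  have d1: "((\<lambda>t. z + t *\<^sub>R d) has_derivative (\<lambda>t. t *\<^sub>R d)) (at 0)"
    by (auto intro!: derivative_eq_intros)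
  have der0: "((\<lambda>w. real_of_ereal (g w)) has_derivative (\<lambda>d. inner G0 d)) (at ((\<lambda>t. z + t *\<^sub>R d) 0))"
    using der by simp
  have "(((\<lambda>w. real_of_ereal (g w)) \<circ> (\<lambda>t. z + t *\<^sub>R d)) has_derivative ((\<lambda>d. inner G0 d) \<circ> (\<lambda>t. t *\<^sub>R d))) (at 0)"
    by (rule diff_chain_at[OF d1 der0])
  moreover have "((\<lambda>d. inner G0 d) \<circ> (\<lambda>t. t *\<^sub>R d)) = (*) (inner G0 d)"
    by (auto simp: fun_eq_iff)
  moreover have "((\<lambda>w. real_of_ereal (g w)) \<circ> (\<lambda>t. z + t *\<^sub>R d)) = phi"
    by (auto simp: fun_eq_iff phi_def)
  ultimately have "(phi has_field_derivative (inner G0 d)) (at 0)"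
    by (simp add: has_field_derivative_def)
  hence "((\<lambda>t. (phi t - phi 0)/(t - 0)) \<longlongrightarrow> inner G0 d) (at 0)"
    by (simp add: has_field_derivative_iff)
  hence lim1: "((\<lambda>t. (phi t - phi 0)/(t - 0)) \<longlongrightarrow> inner G0 d) (at_right 0)"
    by (rule tendsto_mono[OF at_le, rotated]) simp
  have "((\<lambda>t. gw' - gz' - mu/2*(1-t)*N) \<longlongrightarrow> gw' - gz' - mu/2*(1-0)*N) (at_right 0)"
    by (intro tendsto_intros)
  hence lim2: "((\<lambda>t. gw' - gz' - mu/2*(1-t)*N) \<longlongrightarrow> gw' - gz' - mu/2*N) (at_right 0)" by simp
  have ev: "\<forall>\<^sub>F t in at_right 0. (phi t - phi 0)/(t - 0) \<le> gw' - gz' - mu/2*(1-t)*N"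
  proof (rule eventually_mono[OF eventually_at_right_real[of 0 "1::real"]])
    fix t :: real assume "t \<in> {0<..<1}"
    hence t0: "0 < t" and t1: "t < 1" by auto
    have pt: "z + t *\<^sub>R d = t *\<^sub>R w + (1 - t) *\<^sub>R z" unfolding d_def by (simp add: algebra_simps)
    have "g (t *\<^sub>R w + (1 - t) *\<^sub>R z) \<le> ereal t * g w + ereal (1 - t) * g z
         - ereal (mu / 2 * t * (1 - t) * (norm (w - z))\<^sup>2)"
      using sc t0 t1 unfolding strongly_convex_fun_def by blast
    also have "\<dots> = ereal (t*gw' + (1-t)*gz' - mu/2*t*(1-t)*N)"
      unfolding gwe gze N_def d_def by simp
    finally have "phi t \<le> t*gw' + (1-t)*gz' - mu/2*t*(1-t)*N"
      unfolding phi_def pt using nm by (intro ereal_le_real) auto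
    moreover have "phi 0 = gz'" unfolding phi_def gz'_def by simp
    ultimately have "phi t - phi 0 \<le> t*(gw' - gz' - mu/2*(1-t)*N)"
      by (simp add: algebra_simps)
    thus "(phi t - phi 0)/(t - 0) \<le> gw' - gz' - mu/2*(1-t)*N"
      using t0 by (simp add: pos_divide_le_eq mult.commute)
  qed simp
  have "gw' - gz' - mu/2*N \<ge> inner G0 d"
    by (rule tendsto_le[OF _ lim2 lim1 ev]) simp
  thus ?thesis unfolding gw'_def gz'_def N_def d_def by simp
qed

lemma qgrowth:
  fixes f g :: "'a::euclidean_space \<Rightarrow> ereal"
  assumes cf: "convex_fun f" and sc: "strongly_convex_fun mu g"
    and nf: "\<forall>x. f x \<noteq> -\<infinity>" and ng: "\<forall>x. g x \<noteq> -\<infinity>"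
    and mn: "\<forall>z. f xs + g xs \<le> f z + g z"
    and f1: "f xs \<noteq> \<infinity>" and g1: "g xs \<noteq> \<infinity>" and f2: "f y \<noteq> \<infinity>" and g2: "g y \<noteq> \<infinity>"
  shows "real_of_ereal (f y) + real_of_ereal (g y) - (real_of_ereal (f xs) + real_of_ereal (g xs))
           \<ge> mu/2 * (norm (y - xs))\<^sup>2"
proof (rule field_le_mult_one_interval)
  fix z :: real assume z0: "0 < z" and z1: "z < 1"
  define t where "t = 1 - z"
  have t0: "0 < t" and t1: "t < 1" using z0 z1 unfolding t_def by auto
  define fy where "fy = real_of_ereal (f y)"
  define gy where "gy = real_of_ereal (g y)"
  define fs where "fs = real_of_ereal (f xs)"
  define gs where "gs = real_of_ereal (g xs)"
  define N where "N = (norm (y - xs))\<^sup>2"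
  have e1: "f y = ereal fy" unfolding fy_def using f2 nf by (cases "f y") auto
  have e2: "g y = ereal gy" unfolding gy_def using g2 ng by (cases "g y") auto
  have e3: "f xs = ereal fs" unfolding fs_def using f1 nf by (cases "f xs") auto
  have e4: "g xs = ereal gs" unfolding gs_def using g1 ng by (cases "g xs") auto
  define m where "m = t *\<^sub>R y + (1 - t) *\<^sub>R xs"
  have "f m \<le> ereal t * f y + ereal (1 - t) * f xs"
    using cf t0 t1 unfolding convex_fun_def m_def by blast
  also have "\<dots> = ereal (t*fy + (1-t)*fs)" unfolding e1 e3 by simp
  finally have fm: "f m \<le> ereal (t*fy + (1-t)*fs)" .
  have "g m \<le> ereal t * g y + ereal (1 - t) * g xs - ereal (mu / 2 * t * (1 - t) * (norm (y - xs))\<^sup>2)"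
    using sc t0 t1 unfolding strongly_convex_fun_def m_def by blast
  also have "\<dots> = ereal (t*gy + (1-t)*gs - mu/2*t*(1-t)*N)" unfolding e2 e4 N_def by simp
  finally have gm: "g m \<le> ereal (t*gy + (1-t)*gs - mu/2*t*(1-t)*N)" .
  have "ereal (fs + gs) \<le> f m + g m" using mn unfolding e3 e4 by simp
  also have "\<dots> \<le> ereal (t*fy + (1-t)*fs) + ereal (t*gy + (1-t)*gs - mu/2*t*(1-t)*N)"
    by (rule add_mono[OF fm gm])
  finally have "fs + gs \<le> t*fy + (1-t)*fs + (t*gy + (1-t)*gs - mu/2*t*(1-t)*N)" by simp
  hence "t*(mu/2*(1-t)*N) \<le> t*(fy + gy - (fs + gs))" by (simp add: algebra_simps)
  hence "mu/2*(1-t)*N \<le> fy + gy - (fs + gs)" using t0 by (simp add: mult_le_cancel_left)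
  thus "z * (mu / 2 * (norm (y - xs))\<^sup>2) \<le> real_of_ereal (f y) + real_of_ereal (g y) - (real_of_ereal (f xs) + real_of_ereal (g xs))"
    unfolding t_def fy_def gy_def fs_def gs_def N_def by (simp add: algebra_simps)
qed

lemma lam_facts:
  fixes L mu su lam :: real
  assumes L0: "L > 0" and m0: "mu > 0" and s0: "0 < su" and s1: "su \<le> 1" and mL: "mu \<le> L"
    and ld: "lam = su / (sqrt ((su * mu / 2)\<^sup>2 + L\<^sup>2) - su * mu / 2)"
  shows "lam > 0" "lam^2*L^2 = su^2*(1+lam*mu)" "lam*L = su* sqrt(1+lam*mu)" "lam \<ge> su/L"
        "1+lam*mu \<le> 4*(1+su*mu/L)" "su*mu/((1+su)*L) \<le> lam*mu/(1+lam*mu)"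
proof -
  define c where "c = su*mu/2"
  define S where "S = sqrt (c\<^sup>2 + L\<^sup>2)"
  have c0: "c > 0" unfolding c_def using s0 m0 by simp
  have S2: "S^2 = c^2 + L^2" unfolding S_def by simp
  have S0: "S \<ge> 0" unfolding S_def by simp
  have Sc: "S > c"
  proof -
    have "c^2 < S^2" using S2 L0 by simp
    thus ?thesis using S0 c0 by (smt (verit) power_mono)
  qed
  have ld': "lam = su/(S - c)" using ld unfolding S_def c_def .
  show lp: "lam > 0" using ld' Sc s0 by simp
  have l1: "lam*(S-c) = su" using ld' Sc by simp
  have "L^2 = (S-c)*(S+c)" using S2 by (simp add: algebra_simps power2_eq_square)
  hence "lam*L^2 = su*(S+c)" using l1 by (metis mult.assoc mult.commute)
  hence "lam^2*L^2 = su*(lam*(S-c) + 2*c*lam)"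
    by (simp add: power2_eq_square algebra_simps)
  also have "\<dots> = su*(su + 2*c*lam)" by (simp only: l1)
  also have "\<dots> = su^2*(1+lam*mu)" unfolding c_def by (simp add: power2_eq_square algebra_simps)
  finally show ll: "lam^2*L^2 = su^2*(1+lam*mu)" .
  have "sqrt (lam^2*L^2) = sqrt (su^2*(1+lam*mu))" using ll by simp
  thus lL: "lam*L = su* sqrt(1+lam*mu)" using lp L0 s0 by (simp add: real_sqrt_mult)
  have "sqrt(1+lam*mu) \<ge> 1" using lp m0 by simp
  hence "lam*L \<ge> su" using lL s0 by (metis mult_le_cancel_left1 less_le_not_le)
  thus lge: "lam \<ge> su/L" using L0 by (simp add: divide_le_eq mult.commute)
  define w where "w = lam*L/su"
  define m where "m = su*mu/L"
  have "su*mu \<le> 1*mu" using s1 m0 by (intro mult_right_mono) auto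
  hence m1: "m \<le> 1" unfolding m_def using mL L0 by (simp add: divide_le_eq)
  have m00: "m \<ge> 0" unfolding m_def using s0 m0 L0 by simp
  have lmw: "lam*mu = w*m" unfolding w_def m_def using s0 L0 by simp
  have w2: "w^2 = 1 + w*m"
  proof -
    have "w^2 = lam^2*L^2/su^2" unfolding w_def by (simp add: power2_eq_square)
    also have "\<dots> = 1 + lam*mu" unfolding ll using s0 by simp
    finally show ?thesis using lmw by simp
  qed
  have w0: "w \<ge> 0" unfolding w_def using lp L0 s0 by simp
  have wle: "w \<le> 2"
  proof (rule ccontr)
    assume "\<not> w \<le> 2"
    hence w2': "w > 2" by simp
    hence "w*w > 2*w" by simp
    moreover have "w*m \<le> w" using m1 w0 by (simp add: mult_left_le)
    moreover have "w*w = 1 + w*m" using w2 by (simp add: power2_eq_square)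
    ultimately show False using w2' by linarith
  qed
  show "1+lam*mu \<le> 4*(1+su*mu/L)" unfolding lmw m_def[symmetric]
  proof -
    have "w*m \<le> 2*m" using wle m00 by (rule mult_right_mono)
    moreover have "1 + 2*m \<le> 4*(1+m)" using m00 by simp
    ultimately show "1 + w*m \<le> 4*(1+m)" by simp
  qed
  have a1: "lam*L \<ge> su" using lge L0 by (simp add: divide_le_eq mult.commute)
  have a2: "lam*L* su \<ge> su*lam*mu" using mL lp s0 by (simp add: mult.commute mult.left_commute)
  have "su*(1+lam*mu) \<le> lam*L*(1+su)" using a1 a2 by (simp add: algebra_simps)
  hence "su*(1+lam*mu)*mu \<le> lam*L*(1+su)*mu" using m0 by (simp add: mult_right_mono)
  moreover have "(1+su)*L > 0" "1+lam*mu > 0" using s0 L0 lp m0 by (simp_all add: add_pos_pos)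
  ultimately show "su*mu/((1+su)*L) \<le> lam*mu/(1+lam*mu)"
    by (simp add: divide_le_eq le_divide_eq) (simp add: algebra_simps)
qed

lemma a_facts:
  fixes A lam mu a :: real
  assumes A0: "A \<ge> 0" and l0: "lam > 0" and m0: "mu > 0"
    and ad: "a = ((1 + 2 * mu * A) * lam + sqrt (((1 + 2 * mu * A))\<^sup>2 * lam\<^sup>2 + 4 * (1 + mu * A) * A * lam)) / 2"
  shows "a \<ge> (1+2*mu*A)*lam" "a^2 = lam*(1+2*mu*A)*a + lam*(1+mu*A)*A"
proof -
  define B where "B = (1 + 2 * mu * A) * lam"
  define C where "C = (1 + mu * A) * A * lam"
  have B0: "B \<ge> 0" unfolding B_def using A0 l0 m0 by simp
  have C0: "C \<ge> 0" unfolding C_def using A0 l0 m0 by simp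
  define s where "s = sqrt (B^2 + 4*C)"
  have ad': "a = (B + s)/2" unfolding ad B_def C_def s_def by (simp add: power_mult_distrib mult.assoc)
  have s2: "s^2 = B^2 + 4*C" unfolding s_def using B0 C0 by simp
  have sB: "s \<ge> B" unfolding s_def using B0 C0 by (simp add: real_le_rsqrt)
  show "a \<ge> (1+2*mu*A)*lam" using sB unfolding ad' B_def by (simp add: mult.commute)
  have "a^2 - (B*a + C) = (s^2 - B^2 - 4*C)/4" unfolding ad' by (simp add: power2_eq_square field_simps)
  hence "a^2 = B*a + C" using s2 by simp
  thus "a^2 = lam*(1+2*mu*A)*a + lam*(1+mu*A)*A" unfolding B_def C_def by (simp add: algebra_simps)
qed

lemma key1_lem:
  fixes A lam mu a :: real
  assumes hq: "a^2 = lam*(1+2*mu*A)*a + lam*(1+mu*A)*A"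
  shows "a^2*(1+lam*mu) = lam*(A+a)*(1+mu*(A+a))"
proof -
  have "a^2*(1+lam*mu) - lam*(A+a)*(1+mu*(A+a)) = a^2 - (lam*(1+2*mu*A)*a + lam*(1+mu*A)*A)"
    by (simp add: algebra_simps power2_eq_square)
  with hq show ?thesis by simp
qed

lemma growth_step:
  fixes A lam mu a L gam :: real
  assumes A0: "A \<ge> 0" and a0: "a > 0" and l0: "lam > 0" and m0: "mu > 0" and L0: "L > 0"
    and g0: "gam \<ge> 0"
    and hq: "a^2 = lam*(1+2*mu*A)*a + lam*(1+mu*A)*A"
    and gl: "gam^2*(mu/L) \<le> lam*mu/(1+lam*mu)"
  shows "A \<le> (1 - gam* sqrt(mu/L))*(A+a)"
proof -
  have k1: "a^2*(1+lam*mu) = lam*(A+a)*(1+mu*(A+a))" by (rule key1_lem[OF hq])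
  have lm: "1+lam*mu > 0" using l0 m0 by (simp add: add_pos_pos)
  have Aa: "A + a > 0" using A0 a0 by simp
  have "lam*(A+a)*(1+mu*(A+a)) - lam*mu*(A+a)^2 = lam*(A+a)"
    by (simp add: power2_eq_square algebra_simps)
  moreover have "lam*(A+a) \<ge> 0" using l0 Aa by simp
  ultimately have "lam*(A+a)*(1+mu*(A+a)) \<ge> lam*mu*(A+a)^2" by linarith
  hence "a^2 \<ge> (lam*mu/(1+lam*mu))*(A+a)^2" using k1 lm by (simp add: field_simps)
  moreover have "(lam*mu/(1+lam*mu))*(A+a)^2 \<ge> (gam^2*(mu/L))*(A+a)^2"
    using mult_right_mono[OF gl, of "(A+a)^2"] by simp
  ultimately have sq: "(gam* sqrt(mu/L)*(A+a))^2 \<le> a^2" using m0 L0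
    by (simp add: power_mult_distrib)
  have "0 \<le> a" using a0 by simp
  from power2_le_imp_le[OF sq this] have "a \<ge> gam* sqrt(mu/L)*(A+a)" .
  thus ?thesis by (simp add: algebra_simps)
qed

lemma hpe_sigma:
  fixes n1 n2 En s lam eps sh su :: real
  assumes s0: "s > 0" and n1: "n1 \<ge> 0" and E0: "En \<ge> 0" and sh: "sh \<ge> 0" and su: "su \<ge> 0"
    and n2: "n2 \<ge> 0"
    and h: "n1^2/s^2 + 2*lam*eps \<le> sh^2*En^2" and l: "n2 \<le> n1 + su* s*En"
    and le0: "lam*eps \<ge> 0"
  shows "n2^2/s^2 + 2*lam*eps \<le> (sh+su)^2*En^2"
proof -
  define P where "P = n1/s"
  have P0: "P \<ge> 0" unfolding P_def using n1 s0 by simp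
  have hP: "P^2 + 2*lam*eps \<le> sh^2*En^2" using h unfolding P_def by (simp add: power_divide)
  have "P^2 \<le> (sh*En)^2" using hP le0 by (simp add: power_mult_distrib)
  have "0 \<le> sh*En" using sh E0 by simp
  with power2_le_imp_le[OF \<open>P^2 \<le> (sh*En)^2\<close>] have PE: "P \<le> sh*En" by blast
  have "n2/s \<le> P + su*En" using l s0 unfolding P_def by (simp add: divide_le_eq algebra_simps)
  moreover have "0 \<le> n2/s" using n2 s0 by simp
  ultimately have "(n2/s)^2 \<le> (P + su*En)^2" by (simp add: power_mono)
  hence "n2^2/s^2 \<le> P^2 + 2*P*(su*En) + (su*En)^2" by (simp add: power_divide power2_sum)
  moreover have "2*P*(su*En) \<le> 2*(sh*En)*(su*En)" using PE su E0 by (simp add: mult_right_mono)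
  moreover have "(sh+su)^2*En^2 = sh^2*En^2 + 2*(sh*En)*(su*En) + (su*En)^2"
    by (simp add: power2_eq_square algebra_simps)
  ultimately show ?thesis using hP by linarith
qed


theorem theorem5p3:
  fixes f g :: "'a::euclidean_space \<Rightarrow> ereal"
    and G :: "'a \<Rightarrow> 'a"
    and \<Omega> :: "'a set"
    and \<mu> L \<sigma>h \<sigma>u lam :: real
    and x y xt u v :: "nat \<Rightarrow> 'a"
    and \<epsilon> a A :: "nat \<Rightarrow> real"
    and xstar :: 'a
  assumes f_proper: "proper_fun f" and f_closed: "closed_fun f" and f_convex: "convex_fun f"
    and g_proper: "proper_fun g" and g_closed: "closed_fun g" and g_convex: "convex_fun g"
    and h_dom: "edom (\<lambda>z. f z + g z) \<noteq> {}"
    and mu_pos: "\<mu> > 0" and g_strong: "strongly_convex_fun \<mu> g"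
    and Omega_ne: "\<Omega> \<noteq> {}" and Omega_closed: "closed \<Omega>" and Omega_convex: "convex \<Omega>"
    and dom_f: "edom f \<subseteq> \<Omega>"
    and g_diff: "\<exists>U. open U \<and> \<Omega> \<subseteq> U \<and> (\<forall>z\<in>U. g z \<noteq> \<infinity> \<and>
                    ((\<lambda>w. real_of_ereal (g w)) has_derivative (\<lambda>d. inner (G z) d)) (at z))"
    and L_pos: "L > 0"
    and G_lip: "\<forall>z\<in>\<Omega>. \<forall>w\<in>\<Omega>. norm (G z - G w) \<le> L * norm (z - w)"
    and L_ge_mu: "L \<ge> \<mu>"
    and sh: "\<sigma>h \<ge> 0" and su: "0 < \<sigma>u" "\<sigma>u \<le> 1" and ssum: "\<sigma>u + \<sigma>h < 1"
    and lam_def: "lam = \<sigma>u / (sqrt ((\<sigma>u * \<mu> / 2)\<^sup>2 + L\<^sup>2) - \<sigma>u * \<mu> / 2)"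
    and A0: "A 0 = 0"
    and a_def: "\<And>k. a (Suc k) = ((1 + 2 * \<mu> * A k) * lam
                  + sqrt (((1 + 2 * \<mu> * A k))\<^sup>2 * lam\<^sup>2 + 4 * (1 + \<mu> * A k) * A k * lam)) / 2"
    and xt_def: "\<And>k. xt k = ((a (Suc k) - \<mu> * A k * lam) / (A k + a (Suc k))) *\<^sub>R x k
                  + ((A k + \<mu> * A k * lam) / (A k + a (Suc k))) *\<^sub>R y k"
    and PG: "\<And>k. approx_PG_sol f G \<Omega> \<mu> \<sigma>h (xt k) lam (y (Suc k)) (u (Suc k)) (\<epsilon> (Suc k))"
    and A_suc: "\<And>k. A (Suc k) = A k + a (Suc k)"
    and v_def: "\<And>k. v (Suc k) = u (Suc k) + G (y (Suc k))"
    and x_suc: "\<And>k. x (Suc k) = ((1 + \<mu> * A k) / (1 + \<mu> * A (Suc k))) *\<^sub>R x k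
                  + (\<mu> * a (Suc k) / (1 + \<mu> * A (Suc k))) *\<^sub>R y (Suc k)
                  - (a (Suc k) / (1 + \<mu> * A (Suc k))) *\<^sub>R v (Suc k)"
    and xstar_min: "\<forall>z. f xstar + g xstar \<le> f z + g z"
  shows "let \<sigma> = \<sigma>h + \<sigma>u; d0 = norm (xstar - x 0);
             \<gamma> = sqrt (\<sigma>u / (1 + \<sigma>u)); \<rho> = 1 - \<gamma> * sqrt (\<mu> / L) in
     (\<forall>k\<ge>1. (f (y k) + g (y k)) - (f xstar + g xstar) \<le> ereal (L * d0\<^sup>2 / (2 * \<sigma>u) * \<rho> ^ (k - 1))
        \<and> max (norm (xstar - y k)) (norm (xstar - x k))
            \<le> sqrt (L / (\<sigma>u * \<mu>)) * d0 * \<rho> powr (real (k - 1) / 2))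
   \<and> (\<forall>k\<ge>1. v (k + 1) \<in> {w + G (y (k + 1)) | w. w \<in> eps_subdiff f (\<epsilon> (k + 1)) (y (k + 1))}
        \<and> norm (v (k + 1)) \<le> 6 * d0 * L powr (3 / 2) / (\<mu> powr (1 / 2) * \<sigma>u powr (3 / 2))
             * (1 + \<sigma> * sqrt (1 + \<sigma>u * \<mu> / L)) * \<rho> powr (real (k - 1) / 2)
        \<and> \<epsilon> (k + 1) \<le> 3 * \<sigma>\<^sup>2 * d0\<^sup>2 * L\<^sup>2 / (\<sigma>u\<^sup>2 * \<mu>) * \<rho> ^ (k - 1))"
proof -
  obtain U where OU: "\<Omega> \<subseteq> U" and Ug: "\<forall>z\<in>U. g z \<noteq> \<infinity> \<and>
                    ((\<lambda>w. real_of_ereal (g w)) has_derivative (\<lambda>d. inner (G z) d)) (at z)"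
    using g_diff by blast
  have nf: "\<And>x. f x \<noteq> -\<infinity>" using f_proper unfolding proper_fun_def by blast
  have ng: "\<forall>x. g x \<noteq> -\<infinity>" using g_proper unfolding proper_fun_def by blast
  have domO: "\<And>w. f w \<noteq> \<infinity> \<Longrightarrow> w \<in> \<Omega>"
  proof -
    fix w assume "f w \<noteq> \<infinity>"
    hence "f w < \<infinity>" by (simp add: less_le)
    thus "w \<in> \<Omega>" using dom_f unfolding edom_def by blast
  qed
  have gfin: "\<And>w. w \<in> \<Omega> \<Longrightarrow> g w \<noteq> \<infinity>" using Ug OU by blast
  have gder: "\<And>w. w \<in> \<Omega> \<Longrightarrow> ((\<lambda>w. real_of_ereal (g w)) has_derivative (\<lambda>d. inner (G w) d)) (at w)"
    using Ug OU by blast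
  obtain w0 where w0: "f w0 + g w0 < \<infinity>" using h_dom unfolding edom_def by blast
  have fw0: "f w0 \<noteq> \<infinity>" using w0 ng by auto
  have "f xstar + g xstar < \<infinity>" using xstar_min w0 by (meson le_less_trans)
  hence fxs: "f xstar \<noteq> \<infinity>" using ng by auto
  have gxs: "g xstar \<noteq> \<infinity>" using gfin domO fxs by blast
  have PGk: "\<And>k. \<epsilon> (Suc k) \<ge> 0 \<and> u (Suc k) \<in> eps_subdiff f (\<epsilon> (Suc k)) (y (Suc k)) \<and>
       (norm (lam *\<^sub>R (u (Suc k) + G (closest_point \<Omega> (xt k))) + y (Suc k) - xt k))\<^sup>2 / (1 + lam * \<mu>)
         + 2 * lam * \<epsilon> (Suc k) \<le> \<sigma>h\<^sup>2 * (norm (y (Suc k) - xt k))\<^sup>2"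
    using PG unfolding approx_PG_sol_def Let_def by blast
  have fy: "\<And>k. f (y (Suc k)) \<noteq> \<infinity>"
  proof
    fix k assume "f (y (Suc k)) = \<infinity>"
    moreover have "f w0 \<ge> f (y (Suc k)) + ereal (inner (u (Suc k)) (w0 - y (Suc k)) - \<epsilon> (Suc k))"
      using PGk[of k] unfolding eps_subdiff_def by blast
    ultimately show False using fw0 by simp
  qed
  have yO: "\<And>k. y (Suc k) \<in> \<Omega>" using domO fy by blast
  define Hr where "Hr w = real_of_ereal (f w) + real_of_ereal (g w)" for w
  have subg: "\<And>k w. f w \<noteq> \<infinity> \<Longrightarrow> Hr w \<ge> Hr (y (Suc k)) + inner (v (Suc k)) (w - y (Suc k))
                 - \<epsilon> (Suc k) + \<mu>/2*(norm (w - y (Suc k)))\<^sup>2"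
  proof -
    fix k w assume fw: "f w \<noteq> \<infinity>"
    have wO: "w \<in> \<Omega>" using domO fw by blast
    have "f (y (Suc k)) + ereal (inner (u (Suc k)) (w - y (Suc k)) - \<epsilon> (Suc k)) \<le> f w"
      using PGk[of k] unfolding eps_subdiff_def by blast
    hence f1: "real_of_ereal (f (y (Suc k))) + (inner (u (Suc k)) (w - y (Suc k)) - \<epsilon> (Suc k)) \<le> real_of_ereal (f w)"
      using fw fy[of k] nf[of w] nf[of "y (Suc k)"]
      by (cases "f w"; cases "f (y (Suc k))") auto
    have g1: "real_of_ereal (g w) \<ge> real_of_ereal (g (y (Suc k))) + inner (G (y (Suc k))) (w - y (Suc k))
          + \<mu>/2*(norm(w - y (Suc k)))\<^sup>2"
      by (rule grad_ineq[OF g_strong ng gfin[OF yO] gfin[OF wO] gder[OF yO]])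
    have "inner (v (Suc k)) (w - y (Suc k)) = inner (u (Suc k)) (w - y (Suc k)) + inner (G (y (Suc k))) (w - y (Suc k))"
      unfolding v_def by (simp add: inner_add_left)
    thus "Hr w \<ge> Hr (y (Suc k)) + inner (v (Suc k)) (w - y (Suc k)) - \<epsilon> (Suc k) + \<mu>/2*(norm (w - y (Suc k)))\<^sup>2"
      using f1 g1 unfolding Hr_def by linarith
  qed
  note LF = lam_facts[OF L_pos mu_pos su(1) su(2) L_ge_mu lam_def]
  have lp: "lam > 0" using LF(1) .
  have lLs: "lam * L = \<sigma>u * sqrt (1 + lam * \<mu>)" using LF(3) .
  have lge: "lam \<ge> \<sigma>u / L" using LF(4) .
  have l4: "1 + lam * \<mu> \<le> 4 * (1 + \<sigma>u * \<mu> / L)" using LF(5) .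
  have lg: "\<sigma>u * \<mu> / ((1 + \<sigma>u) * L) \<le> lam * \<mu> / (1 + lam * \<mu>)" using LF(6) .
  have A0k: "\<And>k. A k \<ge> 0"
  proof -
    fix k show "A k \<ge> 0"
    proof (induct k)
      case 0 show ?case by (simp add: A0)
    next
      case (Suc k)
      have "a (Suc k) \<ge> (1 + 2*\<mu>*A k)*lam" by (rule a_facts(1)[OF Suc lp mu_pos a_def])
      moreover have "(1 + 2*\<mu>*A k)*lam \<ge> 0" using Suc mu_pos lp by simp
      ultimately show ?case unfolding A_suc using Suc by linarith
    qed
  qed
  have ab: "\<And>k. a (Suc k) \<ge> (1 + 2*\<mu>*A k)*lam" by (rule a_facts(1)[OF A0k lp mu_pos a_def])
  have hq: "\<And>k. (a (Suc k))^2 = lam*(1+2*\<mu>*A k)*a (Suc k) + lam*(1+\<mu>*A k)*A k"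
    by (rule a_facts(2)[OF A0k lp mu_pos a_def])
  have apos: "\<And>k. a (Suc k) > 0"
  proof -
    fix k have "(1 + 2*\<mu>*A k)*lam > 0" using A0k[of k] mu_pos lp by (simp add: add_pos_nonneg)
    thus "a (Suc k) > 0" using ab[of k] by linarith
  qed
  have ha: "\<And>k. a (Suc k) \<ge> \<mu>*A k*lam"
  proof -
    fix k have "(1 + 2*\<mu>*A k)*lam \<ge> \<mu>*A k*lam" using A0k[of k] mu_pos lp by (simp add: algebra_simps)
    thus "a (Suc k) \<ge> \<mu>*A k*lam" using ab[of k] by linarith
  qed
  define sig where "sig = \<sigma>h + \<sigma>u"
  have sig0: "sig \<ge> 0" "sig < 1" using sh su ssum unfolding sig_def by auto
  have sq1: "1 + lam * \<mu> > 0" using lp mu_pos by (simp add: add_pos_pos)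
  define sl where "sl = sqrt (1 + lam * \<mu>)"
  have sl0: "sl > 0" unfolding sl_def using sq1 by simp
  have sl2: "sl^2 = 1 + lam * \<mu>" unfolding sl_def using sq1 by simp
  have zO: "\<And>k. closest_point \<Omega> (xt k) \<in> \<Omega>" by (rule closest_point_in_set[OF Omega_closed Omega_ne])
  have HPEs: "\<And>k. (norm (lam *\<^sub>R v (Suc k) + y (Suc k) - xt k))\<^sup>2/(1+lam*\<mu>) + 2*lam*\<epsilon>(Suc k)
           \<le> sig^2*(norm (y (Suc k) - xt k))\<^sup>2"
  proof -
    fix k
    define z where "z = closest_point \<Omega> (xt k)"
    define e where "e = y (Suc k) - xt k"
    define N1 where "N1 = norm (lam *\<^sub>R (u (Suc k) + G z) + y (Suc k) - xt k)"
    define n2 where "n2 = norm (lam *\<^sub>R v (Suc k) + y (Suc k) - xt k)"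
    have dz: "norm (y (Suc k) - z) \<le> norm e"
    proof -
      have "dist (closest_point \<Omega> (y (Suc k))) (closest_point \<Omega> (xt k)) \<le> dist (y (Suc k)) (xt k)"
        by (rule closest_point_lipschitz[OF Omega_convex Omega_closed Omega_ne])
      thus ?thesis unfolding z_def e_def closest_point_self[OF yO] dist_norm .
    qed
    have Gl: "norm (G (y (Suc k)) - G z) \<le> L * norm e"
    proof -
      have "norm (G (y (Suc k)) - G z) \<le> L * norm (y (Suc k) - z)" using G_lip yO zO unfolding z_def by blast
      also have "\<dots> \<le> L * norm e" using dz L_pos by simp
      finally show ?thesis .
    qed
    have veq: "lam *\<^sub>R v (Suc k) + y (Suc k) - xt k = (lam *\<^sub>R (u (Suc k) + G z) + y (Suc k) - xt k) + lam *\<^sub>R (G (y (Suc k)) - G z)"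
      unfolding v_def by (simp add: algebra_simps)
    have t1: "n2 \<le> N1 + norm (lam *\<^sub>R (G (y (Suc k)) - G z))" unfolding n2_def N1_def veq by (rule norm_triangle_ineq)
    have t2: "norm (lam *\<^sub>R (G (y (Suc k)) - G z)) = lam * norm (G (y (Suc k)) - G z)" using lp by simp
    have t3: "lam * norm (G (y (Suc k)) - G z) \<le> lam * (L * norm e)" using Gl lp by simp
    have t4: "lam * (L * norm e) = \<sigma>u * sl * norm e" using lLs unfolding sl_def by (simp add: mult.assoc[symmetric])
    have n2le: "n2 \<le> N1 + \<sigma>u * sl * norm e" using t1 t2 t3 t4 by linarith
    have h: "N1^2/sl^2 + 2*lam*\<epsilon> (Suc k) \<le> \<sigma>h^2*(norm e)^2" using PGk[of k] unfolding sl2 N1_def z_def e_def by simp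
    have le0: "lam * \<epsilon> (Suc k) \<ge> 0" using PGk[of k] lp by simp
    have "n2^2/sl^2 + 2*lam*\<epsilon> (Suc k) \<le> (\<sigma>h+\<sigma>u)^2*(norm e)^2"
      by (rule hpe_sigma[OF sl0 _ _ sh _ _ h n2le le0]) (use su in \<open>simp_all add: N1_def n2_def\<close>)
    thus "(norm (lam *\<^sub>R v (Suc k) + y (Suc k) - xt k))\<^sup>2/(1+lam*\<mu>) + 2*lam*\<epsilon>(Suc k)
           \<le> sig^2*(norm (y (Suc k) - xt k))\<^sup>2" unfolding sl2 n2_def e_def sig_def .
  qed
  define Phi where "Phi k = A k * (Hr (y k) - Hr xstar) + (1 + \<mu> * A k)/2 * (norm (x k - xstar))\<^sup>2" for k
  have Phistep: "\<And>k. Phi (Suc k) \<le> Phi k"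
  proof -
    fix k
    define Ak where "Ak = A k"
    define ak where "ak = a (Suc k)"
    define y' where "y' = y (Suc k)"
    have Aak: "Ak + ak > 0" unfolding Ak_def ak_def using A0k[of k] apos[of k] by simp
    have Dn: "1 + \<mu>*(Ak+ak) \<noteq> 0" using mu_pos Aak by (smt (verit) mult_pos_pos)
    have Dx: "(1 + \<mu>*(Ak+ak)) *\<^sub>R x (Suc k) = (1 + \<mu>*Ak) *\<^sub>R x k + (\<mu>*ak) *\<^sub>R y' - ak *\<^sub>R v (Suc k)"
      unfolding x_suc A_suc Ak_def[symmetric] ak_def[symmetric] y'_def[symmetric] using Dn
      by (simp add: scaleR_add_right scaleR_diff_right)
    have ht: "(1+\<mu>*(Ak+ak)) *\<^sub>R (x (Suc k) - y') = (1+\<mu>*Ak) *\<^sub>R (x k - y') - ak *\<^sub>R v (Suc k)"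
    proof -
      have "(1+\<mu>*(Ak+ak)) *\<^sub>R (x (Suc k) - y') = (1 + \<mu>*(Ak+ak)) *\<^sub>R x (Suc k) - (1+\<mu>*(Ak+ak)) *\<^sub>R y'"
        by (simp add: scaleR_diff_right)
      also have "\<dots> = (1 + \<mu>*Ak) *\<^sub>R x k + (\<mu>*ak) *\<^sub>R y' - ak *\<^sub>R v (Suc k) - ((1+\<mu>*Ak) + \<mu>*ak) *\<^sub>R y'"
        unfolding Dx by (simp add: algebra_simps)
      also have "\<dots> = (1+\<mu>*Ak) *\<^sub>R (x k - y') - ak *\<^sub>R v (Suc k)"
        by (simp add: algebra_simps)
      finally show ?thesis .
    qed
    define c1 where "c1 = (ak - \<mu>*Ak*lam)/(Ak+ak)"
    define c2 where "c2 = (Ak + \<mu>*Ak*lam)/(Ak+ak)"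
    have c12: "c1 + c2 = 1"
    proof -
      have "c1 + c2 = ((ak - \<mu>*Ak*lam) + (Ak + \<mu>*Ak*lam))/(Ak+ak)" unfolding c1_def c2_def by (rule add_divide_distrib[symmetric])
      also have "(ak - \<mu>*Ak*lam) + (Ak + \<mu>*Ak*lam) = Ak + ak" by simp
      finally show ?thesis using Aak by simp
    qed
    have hE: "xt k - y' = c1 *\<^sub>R (x k - y') + c2 *\<^sub>R (y k - y')"
    proof -
      have "c1 *\<^sub>R (x k - y') + c2 *\<^sub>R (y k - y') = (c1 *\<^sub>R x k + c2 *\<^sub>R y k) - (c1 + c2) *\<^sub>R y'"
        by (simp add: algebra_simps)
      also have "c1 *\<^sub>R x k + c2 *\<^sub>R y k = xt k" unfolding xt_def c1_def c2_def Ak_def ak_def ..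
      finally show ?thesis unfolding c12 by simp
    qed
    have hpe: "(norm (lam *\<^sub>R v (Suc k) - (xt k - y')))\<^sup>2/(1+lam*\<mu>) + 2*lam*\<epsilon> (Suc k) \<le> (norm (xt k - y'))\<^sup>2"
    proof -
      have e1: "lam *\<^sub>R v (Suc k) - (xt k - y') = lam *\<^sub>R v (Suc k) + y (Suc k) - xt k" unfolding y'_def by (simp add: algebra_simps)
      have e2: "norm (xt k - y') = norm (y (Suc k) - xt k)" unfolding y'_def by (rule norm_minus_commute)
      have e3: "sig^2*(norm (y (Suc k) - xt k))\<^sup>2 \<le> 1*(norm (y (Suc k) - xt k))\<^sup>2"
        using sig0 by (intro mult_right_mono) (simp_all add: power_le_one)
      show ?thesis unfolding e1 e2 using HPEs[of k] e3 by linarith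
    qed
    have h1: "Hr xstar \<ge> Hr y' + inner (v (Suc k)) (xstar - y') - \<epsilon> (Suc k) + \<mu>/2 * (norm (xstar - y'))\<^sup>2"
      unfolding y'_def by (rule subg[OF fxs])
    have h2: "Ak*Hr (y k) \<ge> Ak*(Hr y' + inner (v (Suc k)) (y k - y') - \<epsilon> (Suc k) + \<mu>/2*(norm (y k - y'))\<^sup>2)"
    proof (cases k)
      case 0 thus ?thesis unfolding Ak_def by (simp add: A0)
    next
      case (Suc j)
      have "Hr (y k) \<ge> Hr y' + inner (v (Suc k)) (y k - y') - \<epsilon> (Suc k) + \<mu>/2*(norm (y k - y'))\<^sup>2"
        unfolding y'_def Suc by (rule subg[OF fy])
      from mult_left_mono[OF this A0k[of k]] show ?thesis unfolding Ak_def .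
    qed
    have C: "(Ak+ak)*(Hr y'-Hr xstar) + (1+\<mu>*(Ak+ak))/2*(norm ((x (Suc k) - y')-(xstar - y')))\<^sup>2
        \<le> Ak*(Hr (y k)-Hr xstar) + (1+\<mu>*Ak)/2*(norm ((x k - y')-(xstar - y')))\<^sup>2"
    proof -
      have a1: "Ak \<ge> 0" unfolding Ak_def by (rule A0k)
      have a2: "ak > 0" unfolding ak_def by (rule apos)
      have a3: "ak^2 = lam*(1+2*\<mu>*Ak)*ak + lam*(1+\<mu>*Ak)*Ak" unfolding Ak_def ak_def by (rule hq)
      have a4: "ak \<ge> \<mu>*Ak*lam" unfolding Ak_def ak_def by (rule ha)
      have a5: "xt k - y' = ((ak - \<mu>*Ak*lam)/(Ak+ak)) *\<^sub>R (x k - y') + ((Ak + \<mu>*Ak*lam)/(Ak+ak)) *\<^sub>R (y k - y')"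
        using hE unfolding c1_def c2_def .
      show ?thesis by (rule core[OF a1 a2 lp mu_pos a3 a4 ht a5 hpe h1 h2])
    qed
    have n1: "(x (Suc k) - y') - (xstar - y') = x (Suc k) - xstar" by simp
    have n2: "(x k - y') - (xstar - y') = x k - xstar" by simp
    have P1: "Phi (Suc k) = (Ak+ak)*(Hr y'-Hr xstar) + (1+\<mu>*(Ak+ak))/2*(norm (x (Suc k) - xstar))\<^sup>2"
      by (simp only: Phi_def A_suc Ak_def ak_def y'_def)
    have P2: "Phi k = Ak*(Hr (y k)-Hr xstar) + (1+\<mu>*Ak)/2*(norm (x k - xstar))\<^sup>2"
      by (simp only: Phi_def Ak_def)
    show "Phi (Suc k) \<le> Phi k" using C unfolding n1 n2 P1 P2 .
  qed
  have Phi_le: "\<And>k. Phi k \<le> Phi 0"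
  proof -
    fix k show "Phi k \<le> Phi 0"
      by (induct k) (simp, use Phistep order_trans in blast)
  qed
  define d0 where "d0 = norm (xstar - x 0)"
  have Phi0: "Phi 0 = d0^2/2" unfolding Phi_def d0_def A0 by (simp add: norm_minus_commute)
  define gam where "gam = sqrt (\<sigma>u / (1 + \<sigma>u))"
  define rho where "rho = 1 - gam * sqrt (\<mu> / L)"
  have gam0: "gam \<ge> 0" unfolding gam_def using su by simp
  have gam1: "gam < 1" unfolding gam_def using su by simp
  have sml: "sqrt (\<mu>/L) \<le> 1" using L_ge_mu L_pos by simp
  have sml0: "sqrt (\<mu>/L) \<ge> 0" using mu_pos L_pos by simp
  have rho0: "rho > 0"
  proof -
    have "gam * sqrt (\<mu>/L) \<le> gam * 1" using sml gam0 by (rule mult_left_mono)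
    thus ?thesis unfolding rho_def using gam1 by simp
  qed
  have rho1: "rho \<le> 1" unfolding rho_def using gam0 sml0 by simp
  have gl: "gam^2*(\<mu>/L) \<le> lam*\<mu>/(1+lam*\<mu>)"
  proof -
    have "gam^2 = \<sigma>u/(1+\<sigma>u)" unfolding gam_def using su by simp
    hence "gam^2*(\<mu>/L) = \<sigma>u * \<mu> / ((1 + \<sigma>u) * L)" by simp
    thus ?thesis using lg by simp
  qed
  have grow: "\<And>k. A k \<le> rho * A (Suc k)"
  proof -
    fix k
    have "A k \<le> (1 - gam * sqrt(\<mu>/L))*(A k + a (Suc k))"
      by (rule growth_step[OF A0k apos lp mu_pos L_pos gam0 hq gl])
    thus "A k \<le> rho * A (Suc k)" unfolding rho_def A_suc .
  qed
  have Arho: "\<And>j. A (Suc j) * rho^j \<ge> lam"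
  proof -
    fix j show "A (Suc j) * rho^j \<ge> lam"
    proof (induct j)
      case 0 show ?case using ab[of 0] unfolding A_suc A0 by simp
    next
      case (Suc j)
      have "A (Suc j) * rho^j \<le> (rho * A (Suc (Suc j))) * rho^j"
        using grow[of "Suc j"] rho0 by (simp add: mult_right_mono)
      also have "\<dots> = A (Suc (Suc j)) * rho^(Suc j)" by simp
      finally show ?case using Suc by linarith
    qed
  qed
  have Arho': "\<And>j. A (Suc j) * rho^j \<ge> \<sigma>u / L" using Arho lge order_trans by blast
  define Rb where "Rb j = sqrt (L / (\<sigma>u * \<mu>)) * d0 * rho powr (real j / 2)" for j
  have Rb0: "\<And>j. Rb j \<ge> 0" unfolding Rb_def d0_def using L_pos su(1) mu_pos
    by (intro mult_nonneg_nonneg) simp_all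
  have Rb2: "\<And>j. (Rb j)^2 = L * d0^2 * rho^j / (\<sigma>u * \<mu>)"
  proof -
    fix j
    have "rho powr (real j / 2) = sqrt (rho ^ j)" using rho0 by (simp add: powr_half_sqrt_powr powr_realpow)
    hence "(rho powr (real j / 2))^2 = rho^j" using rho0 by simp
    moreover have "(sqrt (L / (\<sigma>u * \<mu>)))^2 = L / (\<sigma>u * \<mu>)" using L_pos su mu_pos by simp
    ultimately show "(Rb j)^2 = L * d0^2 * rho^j / (\<sigma>u * \<mu>)" unfolding Rb_def by (simp add: power_mult_distrib)
  qed
  have Rbmono: "\<And>j. Rb (Suc j) \<le> Rb j"
  proof -
    fix j
    have "rho powr (real (Suc j) / 2) \<le> rho powr (real j / 2)"
      by (rule powr_mono') (use rho0 rho1 in auto)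
    moreover have "0 \<le> sqrt (L / (\<sigma>u * \<mu>)) * d0" unfolding d0_def using L_pos su(1) mu_pos
      by (intro mult_nonneg_nonneg) simp_all
    ultimately show "Rb (Suc j) \<le> Rb j" unfolding Rb_def by (rule mult_left_mono)
  qed
  have le_Rb: "\<And>(j::nat) (X::real). X \<ge> 0 \<Longrightarrow> X^2 \<le> L * d0^2 * rho^j / (\<sigma>u * \<mu>) \<Longrightarrow> X \<le> Rb j"
  proof -
    fix j :: nat and X :: real assume X0: "X \<ge> 0" and X2: "X^2 \<le> L * d0^2 * rho^j / (\<sigma>u * \<mu>)"
    have "X^2 \<le> (Rb j)^2" using X2 Rb2 by simp
    thus "X \<le> Rb j" using Rb0 by (rule power2_le_imp_le)
  qed
  have PA: "\<And>j. (f (y (Suc j)) + g (y (Suc j))) - (f xstar + g xstar) \<le> ereal (L * d0\<^sup>2 / (2 * \<sigma>u) * rho ^ j)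
        \<and> norm (xstar - y (Suc j)) \<le> Rb j \<and> norm (xstar - x (Suc j)) \<le> Rb j"
  proof -
    fix j
    define Ak where "Ak = A (Suc j)"
    define Dy where "Dy = Hr (y (Suc j)) - Hr xstar"
    define Nx where "Nx = (norm (x (Suc j) - xstar))^2"
    have gy: "g (y (Suc j)) \<noteq> \<infinity>" using gfin yO by blast
    have qg: "Dy \<ge> \<mu>/2 * (norm (y (Suc j) - xstar))^2" unfolding Dy_def Hr_def
      by (rule qgrowth[OF f_convex g_strong _ ng xstar_min fxs gxs fy gy]) (use nf in blast)
    have "\<mu> / 2 * (norm (y (Suc j) - xstar))\<^sup>2 \<ge> 0" using mu_pos by simp
    hence Dy0: "Dy \<ge> 0" using qg by linarith
    have Ak0: "Ak \<ge> 0" unfolding Ak_def by (rule A0k)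
    have Nx0: "Nx \<ge> 0" unfolding Nx_def by simp
    have P: "Ak * Dy + (1 + \<mu>*Ak)/2 * Nx \<le> d0^2/2"
    proof -
      have "Phi (Suc j) \<le> d0^2/2" using Phi_le[of "Suc j"] Phi0 by simp
      thus ?thesis unfolding Phi_def Ak_def Dy_def Nx_def .
    qed
    have ArD: "Ak * rho^j \<ge> \<sigma>u / L" unfolding Ak_def by (rule Arho')
    have rj: "rho^j \<ge> 0" using rho0 by simp
    have sL: "\<sigma>u / L > 0" using su L_pos by simp
    have "(1 + \<mu>*Ak)/2 * Nx \<ge> 0" using Ak0 Nx0 mu_pos by simp
    hence AD: "Ak * Dy \<le> d0^2/2" using P by linarith
    have "(\<sigma>u/L) * Dy \<le> (Ak * rho^j) * Dy" using ArD Dy0 by (rule mult_right_mono)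
    also have "\<dots> = rho^j * (Ak * Dy)" by simp
    also have "\<dots> \<le> rho^j * (d0^2/2)" using AD rj by (rule mult_left_mono)
    finally have "(\<sigma>u/L) * Dy \<le> rho^j * (d0^2/2)" .
    hence Dyb: "Dy \<le> L * d0\<^sup>2 / (2 * \<sigma>u) * rho ^ j" using su L_pos
      by (simp add: field_simps)
    have eq: "(f (y (Suc j)) + g (y (Suc j))) - (f xstar + g xstar) = ereal Dy"
      unfolding Dy_def Hr_def using fy[of j] gy fxs gxs nf[of "y (Suc j)"] nf[of xstar] ng
      by (cases "f (y (Suc j))"; cases "g (y (Suc j))"; cases "f xstar"; cases "g xstar") auto
    have c1: "(f (y (Suc j)) + g (y (Suc j))) - (f xstar + g xstar) \<le> ereal (L * d0\<^sup>2 / (2 * \<sigma>u) * rho ^ j)"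
      unfolding eq using Dyb by simp
    have "(norm (xstar - y (Suc j)))^2 \<le> 2 / \<mu> * Dy" using qg mu_pos
      by (simp add: norm_minus_commute field_simps)
    also have "\<dots> \<le> 2 / \<mu> * (L * d0\<^sup>2 / (2 * \<sigma>u) * rho ^ j)" by (rule mult_left_mono[OF Dyb]) (use mu_pos in simp)
    also have "\<dots> = L * d0^2 * rho^j / (\<sigma>u * \<mu>)" by (simp add: field_simps)
    finally have c2: "norm (xstar - y (Suc j)) \<le> Rb j" by (intro le_Rb) simp_all
    have "\<mu> * Ak * Nx \<le> d0^2"
    proof -
      have "Ak * Dy \<ge> 0" using Ak0 Dy0 by simp
      hence "(1 + \<mu>*Ak) * Nx \<le> d0^2" using P by linarith
      moreover have "\<mu> * Ak * Nx \<le> (1 + \<mu>*Ak) * Nx" using Nx0 by (simp add: mult_right_mono)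
      ultimately show ?thesis by linarith
    qed
    from mult_right_mono[OF this rj] have "(\<mu> * Ak * Nx) * rho^j \<le> d0^2 * rho^j" .
    moreover have "(\<mu> * Nx) * (Ak * rho^j) = (\<mu> * Ak * Nx) * rho^j" by (simp add: algebra_simps)
    ultimately have "(\<mu> * Nx) * (Ak * rho^j) \<le> d0^2 * rho^j" by linarith
    moreover have "(\<mu> * Nx) * (\<sigma>u / L) \<le> (\<mu> * Nx) * (Ak * rho^j)" by (rule mult_left_mono[OF ArD]) (use Nx0 mu_pos in simp)
    ultimately have "(\<mu> * Nx) * (\<sigma>u / L) \<le> d0^2 * rho^j" by linarith
    hence NxB: "Nx \<le> L * d0^2 * rho^j / (\<sigma>u * \<mu>)" using su L_pos mu_pos by (simp add: field_simps)
    have c3: "norm (xstar - x (Suc j)) \<le> Rb j"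
    proof (rule le_Rb)
      show "0 \<le> norm (xstar - x (Suc j))" by simp
      show "(norm (xstar - x (Suc j)))^2 \<le> L * d0^2 * rho^j / (\<sigma>u * \<mu>)" using NxB unfolding Nx_def by (simp add: norm_minus_commute)
    qed
    show "(f (y (Suc j)) + g (y (Suc j))) - (f xstar + g xstar) \<le> ereal (L * d0\<^sup>2 / (2 * \<sigma>u) * rho ^ j)
        \<and> norm (xstar - y (Suc j)) \<le> Rb j \<and> norm (xstar - x (Suc j)) \<le> Rb j" using c1 c2 c3 by blast
  qed
  have PB: "\<And>j. v (Suc (Suc j)) \<in> {w + G (y (Suc (Suc j))) | w. w \<in> eps_subdiff f (\<epsilon> (Suc (Suc j))) (y (Suc (Suc j)))}
        \<and> norm (v (Suc (Suc j))) \<le> 6 * d0 * L powr (3 / 2) / (\<mu> powr (1 / 2) * \<sigma>u powr (3 / 2))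
             * (1 + sig * sqrt (1 + \<sigma>u * \<mu> / L)) * rho powr (real j / 2)
        \<and> \<epsilon> (Suc (Suc j)) \<le> 3 * sig\<^sup>2 * d0\<^sup>2 * L\<^sup>2 / (\<sigma>u\<^sup>2 * \<mu>) * rho ^ j"
  proof -
    fix j
    define k where "k = Suc j"
    have mem: "v (Suc k) \<in> {w + G (y (Suc k)) | w. w \<in> eps_subdiff f (\<epsilon> (Suc k)) (y (Suc k))}"
      using PGk[of k] unfolding v_def by blast
    define En where "En = norm (y (Suc k) - xt k)"
    define n2 where "n2 = norm (lam *\<^sub>R v (Suc k) + y (Suc k) - xt k)"
    have E0: "En \<ge> 0" unfolding En_def by simp
    have xtb: "norm (xt k - xstar) \<le> Rb j"
    proof -
      define c1 where "c1 = (a (Suc k) - \<mu> * A k * lam) / (A k + a (Suc k))"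
      define c2 where "c2 = (A k + \<mu> * A k * lam) / (A k + a (Suc k))"
      have Aak: "A k + a (Suc k) > 0" using A0k[of k] apos[of k] by simp
      have c1p: "c1 \<ge> 0" unfolding c1_def using ha[of k] Aak by simp
      have c2p: "c2 \<ge> 0" unfolding c2_def using A0k[of k] lp mu_pos Aak by simp
      have c12: "c1 + c2 = 1"
      proof -
        have "c1 + c2 = ((a (Suc k) - \<mu> * A k * lam) + (A k + \<mu> * A k * lam))/(A k + a (Suc k))"
          unfolding c1_def c2_def by (rule add_divide_distrib[symmetric])
        also have "(a (Suc k) - \<mu> * A k * lam) + (A k + \<mu> * A k * lam) = A k + a (Suc k)" by simp
        finally show ?thesis using Aak by simp
      qed
      have "xt k - xstar = c1 *\<^sub>R (x k - xstar) + c2 *\<^sub>R (y k - xstar)"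
      proof -
        have "c1 *\<^sub>R (x k - xstar) + c2 *\<^sub>R (y k - xstar) = (c1 *\<^sub>R x k + c2 *\<^sub>R y k) - (c1 + c2) *\<^sub>R xstar"
          by (simp add: algebra_simps)
        also have "c1 *\<^sub>R x k + c2 *\<^sub>R y k = xt k" unfolding xt_def c1_def c2_def ..
        finally show ?thesis unfolding c12 by simp
      qed
      hence "norm (xt k - xstar) \<le> norm (c1 *\<^sub>R (x k - xstar)) + norm (c2 *\<^sub>R (y k - xstar))"
        by (simp only: norm_triangle_ineq)
      also have "\<dots> = c1 * norm (x k - xstar) + c2 * norm (y k - xstar)" using c1p c2p by simp
      also have "\<dots> \<le> c1 * Rb j + c2 * Rb j"
        using PA[of j] c1p c2p unfolding k_def
        by (intro add_mono mult_left_mono) (simp_all add: norm_minus_commute)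
      also have "\<dots> = (c1 + c2) * Rb j" by (simp add: algebra_simps)
      also have "\<dots> = Rb j" using c12 by simp
      finally show ?thesis .
    qed
    have ynb: "norm (y (Suc k) - xstar) \<le> Rb j"
    proof -
      have "norm (xstar - y (Suc (Suc j))) \<le> Rb (Suc j)" using PA[of "Suc j"] by blast
      thus ?thesis using Rbmono[of j] unfolding k_def by (simp add: norm_minus_commute)
    qed
    have Eb: "En \<le> 2 * Rb j"
    proof -
      have "En \<le> norm (y (Suc k) - xstar) + norm (xt k - xstar)" unfolding En_def
        using norm_triangle_ineq4[of "y (Suc k) - xstar" "xt k - xstar"] by simp
      thus ?thesis using xtb ynb by linarith
    qed
    have H: "n2^2/(1+lam*\<mu>) + 2*lam*\<epsilon>(Suc k) \<le> sig^2*En^2" using HPEs[of k] unfolding n2_def En_def .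
    have ep0: "\<epsilon> (Suc k) \<ge> 0" using PGk[of k] by simp
    have le0: "lam * \<epsilon> (Suc k) \<ge> 0" using ep0 lp by simp
    have "n2^2/(1+lam*\<mu>) \<le> sig^2*En^2" using H le0 by linarith
    hence "n2^2 \<le> sig^2*En^2*(1+lam*\<mu>)" using sq1 by (simp add: pos_divide_le_eq)
    hence "n2^2 \<le> (sig * sl * En)^2" using sl2 by (simp add: power_mult_distrib mult.commute mult.left_commute)
    moreover have "0 \<le> sig * sl * En" using sig0 sl0 E0 by simp
    ultimately have n2b: "n2 \<le> sig * sl * En" by (rule power2_le_imp_le)
    have "lam * norm (v (Suc k)) = norm ((lam *\<^sub>R v (Suc k) + y (Suc k) - xt k) - (y (Suc k) - xt k))"
      using lp by simp
    also have "\<dots> \<le> n2 + En" unfolding n2_def En_def by (rule norm_triangle_ineq4)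
    finally have lv0: "lam * norm (v (Suc k)) \<le> n2 + En" .
    have "(1 + sig * sl) * En = En + sig * sl * En" by (simp add: algebra_simps)
    hence lv: "lam * norm (v (Suc k)) \<le> (1 + sig * sl) * En" using lv0 n2b by linarith
    define m where "m = \<sigma>u * \<mu> / L"
    have m0: "m \<ge> 0" unfolding m_def using su mu_pos L_pos by simp
    have slb: "sl \<le> 2 * sqrt (1 + m)"
    proof -
      have "sl \<le> sqrt (4 * (1 + m))" unfolding sl_def m_def using l4 by simp
      also have "\<dots> = sqrt 4 * sqrt (1 + m)" by (rule real_sqrt_mult)
      also have "sqrt 4 = (2::real)" by (simp add: real_sqrt_eq_iff)
      finally show ?thesis .
    qed
    have "sig * sl \<le> sig * (2 * sqrt (1 + m))" using slb sig0(1) by (rule mult_left_mono)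
    hence K1: "1 + sig * sl \<le> 1 + sig * (2 * sqrt (1 + m))" by simp
    have K10: "0 \<le> 1 + sig * (2 * sqrt (1 + m))" using sig0 m0 by simp
    have "(1 + sig * sl) * En \<le> (1 + sig * (2 * sqrt (1 + m))) * En" using K1 E0 by (rule mult_right_mono)
    also have "\<dots> \<le> (1 + sig * (2 * sqrt (1 + m))) * (2 * Rb j)" using Eb K10 by (rule mult_left_mono)
    also have "\<dots> = 2 * Rb j + 4 * (sig * sqrt (1 + m) * Rb j)" by (simp add: algebra_simps)
    finally have lv1: "(1 + sig * sl) * En \<le> 2 * Rb j + 4 * (sig * sqrt (1 + m) * Rb j)" .
    have "4 * (1 + sig * sqrt (1 + m)) * Rb j = 4 * Rb j + 4 * (sig * sqrt (1 + m) * Rb j)" by (simp add: algebra_simps)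
    hence lv2: "lam * norm (v (Suc k)) \<le> 4 * (1 + sig * sqrt (1 + m)) * Rb j" using lv lv1 Rb0[of j] by linarith
    have "(\<sigma>u / L) * norm (v (Suc k)) \<le> lam * norm (v (Suc k))" using lge norm_ge_zero by (rule mult_right_mono)
    hence vb0: "(\<sigma>u / L) * norm (v (Suc k)) \<le> 4 * (1 + sig * sqrt (1 + m)) * Rb j" using lv2 by linarith
    have "norm (v (Suc k)) = (L / \<sigma>u) * ((\<sigma>u / L) * norm (v (Suc k)))" using su L_pos by simp
    also have "\<dots> \<le> (L / \<sigma>u) * (4 * (1 + sig * sqrt (1 + m)) * Rb j)" using vb0 by (rule mult_left_mono) (use su L_pos in simp)
    also have "\<dots> = 4 * (L / \<sigma>u) * (1 + sig * sqrt (1 + m)) * Rb j" by simp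
    finally have vb: "norm (v (Suc k)) \<le> 4 * (L / \<sigma>u) * (1 + sig * sqrt (1 + m)) * Rb j" .
    have K: "6 * d0 * L powr (3 / 2) / (\<mu> powr (1 / 2) * \<sigma>u powr (3 / 2))
             * (1 + sig * sqrt (1 + \<sigma>u * \<mu> / L)) * rho powr (real j / 2)
          = 6 * (L / \<sigma>u) * (1 + sig * sqrt (1 + m)) * Rb j"
    proof -
      have p1: "L powr (3/2) = L * sqrt L"
      proof -
        have "L powr (3/2) = L powr (1 + 1/2)" by simp
        also have "\<dots> = L powr 1 * L powr (1/2)" by (rule powr_add)
        also have "\<dots> = L * sqrt L" using L_pos by (simp add: powr_half_sqrt)
        finally show ?thesis .
      qed
      have p2: "\<sigma>u powr (3/2) = \<sigma>u * sqrt \<sigma>u"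
      proof -
        have "\<sigma>u powr (3/2) = \<sigma>u powr (1 + 1/2)" by simp
        also have "\<dots> = \<sigma>u powr 1 * \<sigma>u powr (1/2)" by (rule powr_add)
        also have "\<dots> = \<sigma>u * sqrt \<sigma>u" using su by (simp add: powr_half_sqrt)
        finally show ?thesis .
      qed
      have p3: "\<mu> powr (1/2) = sqrt \<mu>" using mu_pos by (simp add: powr_half_sqrt)
      have p4: "sqrt (L / (\<sigma>u * \<mu>)) = sqrt L / (sqrt \<sigma>u * sqrt \<mu>)" by (simp add: real_sqrt_divide real_sqrt_mult)
      show ?thesis unfolding Rb_def p1 p2 p3 p4 m_def using su L_pos mu_pos by (simp add: field_simps)
    qed
    have vfin: "norm (v (Suc k)) \<le> 6 * d0 * L powr (3 / 2) / (\<mu> powr (1 / 2) * \<sigma>u powr (3 / 2))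
             * (1 + sig * sqrt (1 + \<sigma>u * \<mu> / L)) * rho powr (real j / 2)"
    proof -
      have "0 \<le> (L / \<sigma>u) * (1 + sig * sqrt (1 + m)) * Rb j" using su L_pos sig0 m0 Rb0[of j] by simp
      moreover obtain Z where Z: "Z = (L / \<sigma>u) * (1 + sig * sqrt (1 + m)) * Rb j" by blast
      ultimately have Z0: "0 \<le> Z" by simp
      have "norm (v (Suc k)) \<le> 4 * Z" using vb unfolding Z by (simp add: mult.assoc)
      also have "4 * Z \<le> 6 * Z" using Z0 by simp
      also have "6 * Z = 6 * (L / \<sigma>u) * (1 + sig * sqrt (1 + m)) * Rb j" unfolding Z by (simp add: mult.assoc)
      finally show ?thesis unfolding K .
    qed
    have "n2^2/(1+lam*\<mu>) \<ge> 0" using sq1 by simp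
    hence "2*lam*\<epsilon>(Suc k) \<le> sig^2*En^2" using H by linarith
    also have "\<dots> \<le> sig^2*(2 * Rb j)^2" by (rule mult_left_mono[OF power_mono[OF Eb E0]]) simp
    also have "\<dots> = 4 * sig^2 * (L * d0^2 * rho^j / (\<sigma>u * \<mu>))" unfolding power_mult_distrib Rb2 by simp
    finally have e1': "2*lam*\<epsilon>(Suc k) \<le> 4 * sig^2 * (L * d0^2 * rho^j / (\<sigma>u * \<mu>))" .
    hence e1: "lam*\<epsilon>(Suc k) \<le> 2 * sig^2 * (L * d0^2 * rho^j / (\<sigma>u * \<mu>))" by linarith
    have "(\<sigma>u / L) * \<epsilon>(Suc k) \<le> lam * \<epsilon>(Suc k)" using lge ep0 by (rule mult_right_mono)
    hence e2: "(\<sigma>u / L) * \<epsilon>(Suc k) \<le> 2 * sig^2 * (L * d0^2 * rho^j / (\<sigma>u * \<mu>))" using e1 by linarith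
    define X where "X = sig^2 * d0^2 * L^2 / (\<sigma>u^2 * \<mu>) * rho ^ j"
    have X0: "X \<ge> 0" unfolding X_def using mu_pos rho0 by simp
    have "\<epsilon>(Suc k) = (L / \<sigma>u) * ((\<sigma>u / L) * \<epsilon>(Suc k))" using su L_pos by simp
    also have "\<dots> \<le> (L / \<sigma>u) * (2 * sig^2 * (L * d0^2 * rho^j / (\<sigma>u * \<mu>)))"
      using e2 by (rule mult_left_mono) (use su L_pos in simp)
    also have "\<dots> = 2 * X" unfolding X_def using su L_pos mu_pos by (simp add: field_simps power2_eq_square)
    finally have "\<epsilon>(Suc k) \<le> 2 * X" .
    hence "\<epsilon>(Suc k) \<le> 3 * X" using X0 by linarith
    moreover have "3 * X = 3 * sig\<^sup>2 * d0\<^sup>2 * L\<^sup>2 / (\<sigma>u\<^sup>2 * \<mu>) * rho ^ j" unfolding X_def by simp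
    ultimately have efin: "\<epsilon>(Suc k) \<le> 3 * sig\<^sup>2 * d0\<^sup>2 * L\<^sup>2 / (\<sigma>u\<^sup>2 * \<mu>) * rho ^ j" by simp
    show "v (Suc (Suc j)) \<in> {w + G (y (Suc (Suc j))) | w. w \<in> eps_subdiff f (\<epsilon> (Suc (Suc j))) (y (Suc (Suc j)))}
        \<and> norm (v (Suc (Suc j))) \<le> 6 * d0 * L powr (3 / 2) / (\<mu> powr (1 / 2) * \<sigma>u powr (3 / 2))
             * (1 + sig * sqrt (1 + \<sigma>u * \<mu> / L)) * rho powr (real j / 2)
        \<and> \<epsilon> (Suc (Suc j)) \<le> 3 * sig\<^sup>2 * d0\<^sup>2 * L\<^sup>2 / (\<sigma>u\<^sup>2 * \<mu>) * rho ^ j"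
      using mem vfin efin unfolding k_def by blast
  qed
  have FA: "\<forall>k\<ge>1. (f (y k) + g (y k)) - (f xstar + g xstar) \<le> ereal (L * d0\<^sup>2 / (2 * \<sigma>u) * rho ^ (k - 1))
        \<and> max (norm (xstar - y k)) (norm (xstar - x k))
            \<le> sqrt (L / (\<sigma>u * \<mu>)) * d0 * rho powr (real (k - 1) / 2)"
  proof (intro allI impI)
    fix k :: nat assume "k \<ge> 1"
    then obtain j where kj: "k = Suc j" by (cases k) auto
    show "(f (y k) + g (y k)) - (f xstar + g xstar) \<le> ereal (L * d0\<^sup>2 / (2 * \<sigma>u) * rho ^ (k - 1))
        \<and> max (norm (xstar - y k)) (norm (xstar - x k))
            \<le> sqrt (L / (\<sigma>u * \<mu>)) * d0 * rho powr (real (k - 1) / 2)"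
      using PA[of j] unfolding kj Rb_def by simp
  qed
  have FB: "\<forall>k\<ge>1. v (k + 1) \<in> {w + G (y (k + 1)) | w. w \<in> eps_subdiff f (\<epsilon> (k + 1)) (y (k + 1))}
        \<and> norm (v (k + 1)) \<le> 6 * d0 * L powr (3 / 2) / (\<mu> powr (1 / 2) * \<sigma>u powr (3 / 2))
             * (1 + sig * sqrt (1 + \<sigma>u * \<mu> / L)) * rho powr (real (k - 1) / 2)
        \<and> \<epsilon> (k + 1) \<le> 3 * sig\<^sup>2 * d0\<^sup>2 * L\<^sup>2 / (\<sigma>u\<^sup>2 * \<mu>) * rho ^ (k - 1)"
  proof (intro allI impI)
    fix k :: nat assume "k \<ge> 1"
    then obtain j where kj: "k = Suc j" by (cases k) auto
    show "v (k + 1) \<in> {w + G (y (k + 1)) | w. w \<in> eps_subdiff f (\<epsilon> (k + 1)) (y (k + 1))}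
        \<and> norm (v (k + 1)) \<le> 6 * d0 * L powr (3 / 2) / (\<mu> powr (1 / 2) * \<sigma>u powr (3 / 2))
             * (1 + sig * sqrt (1 + \<sigma>u * \<mu> / L)) * rho powr (real (k - 1) / 2)
        \<and> \<epsilon> (k + 1) \<le> 3 * sig\<^sup>2 * d0\<^sup>2 * L\<^sup>2 / (\<sigma>u\<^sup>2 * \<mu>) * rho ^ (k - 1)"
      using PB[of j] unfolding kj by simp
  qed
  show ?thesis unfolding Let_def sig_def[symmetric] d0_def[symmetric] gam_def[symmetric] rho_def[symmetric]
    using FA FB by blast
qed

end
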